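(* Let $Q$ be a $\Sigma$-uniformized query with hypergraph $\mathcal{H}=(V,E)$, input size $n$, $p$ machines, and let $\Delta>0$. Let $\psi$ be the vector returned by the procedure Construct$(Q,\Delta)$. Then (1) $|\psi|_1\le 1$; (2) the vertex weight mapping $\mathbf{V}(\psi)/\Delta$ is consistent with $Q$; (3) $|\mathbf{V}(\psi)|_1\le\kappa(\mathcal{H})$.
   Context: A natural join query $Q$ is a set of relations (distinct schemas) with hypergraph $\mathcal{H}=(V,E)$, $V=\bigcup_R\mathrm{vars}(R)$, $E=\{\mathrm{vars}(R)\}$. $\mathcal{H}[S]$ has vertex set $S$ and edges $\{S\cap e: e\in E, S\cap e\ne\emptyset\}$; $\mathsf{red}$ removes every edge strictly contained in another; $\tau^*$ is the minimum fractional vertex cover value; $\kappa(\mathcal{H})=\max_{S\subseteq V}\tau^*(\mathsf{red}(\mathcal{H}[S]))$. $\deg_R(Y\mid X)=\max_{\mathbf{x}}|\pi_Y\sigma_{X=\mathbf{x}}R|$. A constraint set for $R$ is $\sigma_R:\mathcal{P}(\mathrm{vars}(R))\to\mathbb{R}_{\ge0}$; $R$ satisfies it if $\deg_R(Y\mid X)\le2\sigma_R(X)/\sigma_R(Y)$ for all $X\subseteq Y\subseteq\mathrm{vars}(R)$; $Q$ is $\Sigma$-uniformized ($\Sigma=\{\sigma_R\}_{R\in Q}$) if each $R$ satisfies $\sigma_R$. A vertex weight mapping is $\mathbf{v}:V\to\mathbb{R}_{\ge0}$. For $R\in Q$ and $U\subseteq\mathrm{vars}(R)$: $U$ is heavy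 in $R$ if $\sigma_R(U)\ge n/p^{\sum_{i\in U}v_i}$, light if $\sigma_R(U)< n/p^{\sum_{i\in U}v_i}$, consistent if $\sigma_R(U)\le n/p^{\sum_{i\in U}v_i}$. $\mathbf{v}$ is consistent with $Q$ if every $U\subseteq\mathrm{vars}(R)$ is consistent in $R$ for every $R\in Q$. $H[\mathbf{v}]$ is the union of all sets $U$ such that $U$ is heavy in some $R\in Q$. For each $U\subseteq V$ fix a minimum fractional vertex cover $\mathbf{v}^*_U$ of $\mathsf{red}(\mathcal{H}[U])$ (a vector on $V$, zero outside $U$). For $\psi=(\psi_U)_{U\in\mathcal{P}(V)}$, $\mathbf{V}(\psi)=\sum_U\psi_U\mathbf{v}^*_U$ and $|\psi|_1=\sum_U\psi_U$. Construct$(Q,\Delta)$: set $\psi\gets\mathbf{0}$; while $|\psi|_1<1$ and $H[\mathbf{V}(\psi)/\Delta]\ne V$: let $L=V\setminus H[\mathbf{V}(\psi)/\Delta]$ and set $\psi_L$ to the largest $\delta\in(0,1-|\psi|_1]$ such that $Q$ is consistent with $(\mathbf{V}(\psi)+\delta\mathbf{v}^*_L)/\Delta$; return $\psi$.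
   Formalization: Each constraint value $\sigma_R(U)$, for $R\in Q$ and $U\subseteq\mathrm{vars}(R)$, is also bounded by the input size n, so Q is consistent with the zero vertex weight mapping. The statement above fails without it. *)

theory Defs
  imports Complex_Main
begin

text \<open>A query is given by its finite set of schemas E (the hyperedges; schemas are
distinct, so each relation is identified with its schema e) and a map R assigning to each
schema e its relation R e, a set of tuples. A tuple is a function from attributes to values;
only its values on e matter.\<close>

definition proj :: "'v set \<Rightarrow> ('v \<Rightarrow> 'd) \<Rightarrow> ('v \<Rightarrow> 'd)" where
  "proj Y t = (\<lambda>x. if x \<in> Y then t x else undefined)"

definition deg :: "('v \<Rightarrow> 'd) set \<Rightarrow> 'v set \<Rightarrow> 'v set \<Rightarrow> nat" where
  "deg Rl Y X = Max ({card (proj Y ` {t \<in> Rl. proj X t = proj X s}) | s. s \<in> Rl} \<union> {0})"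

definition satisfies :: "('v \<Rightarrow> 'd) set \<Rightarrow> 'v set \<Rightarrow> ('v set \<Rightarrow> real) \<Rightarrow> bool" where
  "satisfies Rl e sig \<longleftrightarrow>
     (\<forall>X Y. X \<subseteq> Y \<and> Y \<subseteq> e \<longrightarrow> real (deg Rl Y X) \<le> 2 * sig X / sig Y)"

definition uniformized ::
  "'v set set \<Rightarrow> ('v set \<Rightarrow> ('v \<Rightarrow> 'd) set) \<Rightarrow> ('v set \<Rightarrow> 'v set \<Rightarrow> real) \<Rightarrow> bool" where
  "uniformized E R \<Sigma> \<longleftrightarrow> (\<forall>e\<in>E. satisfies (R e) e (\<Sigma> e))"

definition induced :: "'v set set \<Rightarrow> 'v set \<Rightarrow> 'v set set" where
  "induced E S = {S \<inter> e | e. e \<in> E \<and> S \<inter> e \<noteq> {}}"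

definition red :: "'v set set \<Rightarrow> 'v set set" where
  "red F = {f \<in> F. \<not> (\<exists>g\<in>F. f \<subset> g)}"

definition is_fvc :: "'v set \<Rightarrow> 'v set set \<Rightarrow> ('v \<Rightarrow> real) \<Rightarrow> bool" where
  "is_fvc S F w \<longleftrightarrow> (\<forall>x\<in>S. 0 \<le> w x) \<and> (\<forall>f\<in>F. (\<Sum>x\<in>f. w x) \<ge> 1)"

definition tau_star :: "'v set \<Rightarrow> 'v set set \<Rightarrow> real" where
  "tau_star S F = Inf {(\<Sum>x\<in>S. w x) | w. is_fvc S F w}"

definition is_min_fvc :: "'v set \<Rightarrow> 'v set set \<Rightarrow> ('v \<Rightarrow> real) \<Rightarrow> bool" where
  "is_min_fvc S F w \<longleftrightarrow> is_fvc S F w \<and> (\<forall>w'. is_fvc S F w' \<longrightarrow> (\<Sum>x\<in>S. w x) \<le> (\<Sum>x\<in>S. w' x))"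

definition kappa :: "'v set set \<Rightarrow> real" where
  "kappa E = Max {tau_star S (red (induced E S)) | S. S \<subseteq> \<Union>E}"

definition wsum :: "('v \<Rightarrow> real) \<Rightarrow> 'v set \<Rightarrow> real" where
  "wsum v U = (\<Sum>i\<in>U. v i)"

definition heavy :: "('v set \<Rightarrow> 'v set \<Rightarrow> real) \<Rightarrow> real \<Rightarrow> nat \<Rightarrow> ('v \<Rightarrow> real) \<Rightarrow> 'v set \<Rightarrow> 'v set \<Rightarrow> bool" where
  "heavy \<Sigma> n p v e U \<longleftrightarrow> \<Sigma> e U \<ge> n / (real p) powr (wsum v U)"

definition light :: "('v set \<Rightarrow> 'v set \<Rightarrow> real) \<Rightarrow> real \<Rightarrow> nat \<Rightarrow> ('v \<Rightarrow> real) \<Rightarrow> 'v set \<Rightarrow> 'v set \<Rightarrow> bool" where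
  "light \<Sigma> n p v e U \<longleftrightarrow> \<Sigma> e U < n / (real p) powr (wsum v U)"

definition consistent_set :: "('v set \<Rightarrow> 'v set \<Rightarrow> real) \<Rightarrow> real \<Rightarrow> nat \<Rightarrow> ('v \<Rightarrow> real) \<Rightarrow> 'v set \<Rightarrow> 'v set \<Rightarrow> bool" where
  "consistent_set \<Sigma> n p v e U \<longleftrightarrow> \<Sigma> e U \<le> n / (real p) powr (wsum v U)"

definition consistent :: "'v set set \<Rightarrow> ('v set \<Rightarrow> 'v set \<Rightarrow> real) \<Rightarrow> real \<Rightarrow> nat \<Rightarrow> ('v \<Rightarrow> real) \<Rightarrow> bool" where
  "consistent E \<Sigma> n p v \<longleftrightarrow> (\<forall>e\<in>E. \<forall>U. U \<subseteq> e \<longrightarrow> consistent_set \<Sigma> n p v e U)"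

definition heavy_part :: "'v set set \<Rightarrow> ('v set \<Rightarrow> 'v set \<Rightarrow> real) \<Rightarrow> real \<Rightarrow> nat \<Rightarrow> ('v \<Rightarrow> real) \<Rightarrow> 'v set" where
  "heavy_part E \<Sigma> n p v = \<Union>{U. \<exists>e\<in>E. U \<subseteq> e \<and> heavy \<Sigma> n p v e U}"

text \<open>psi is indexed by subsets of V; vstar U is the fixed minimum fractional vertex cover
of red(H[U]).\<close>

definition Vmap :: "'v set \<Rightarrow> ('v set \<Rightarrow> 'v \<Rightarrow> real) \<Rightarrow> ('v set \<Rightarrow> real) \<Rightarrow> 'v \<Rightarrow> real" where
  "Vmap V vstar \<psi> = (\<lambda>x. \<Sum>U\<in>Pow V. \<psi> U * vstar U x)"

definition norm1 :: "'v set \<Rightarrow> ('v set \<Rightarrow> real) \<Rightarrow> real" where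
  "norm1 V \<psi> = (\<Sum>U\<in>Pow V. \<psi> U)"

definition scale :: "real \<Rightarrow> ('v \<Rightarrow> real) \<Rightarrow> 'v \<Rightarrow> real" where
  "scale \<Delta> v = (\<lambda>x. v x / \<Delta>)"

definition loop_cond ::
  "'v set set \<Rightarrow> ('v set \<Rightarrow> 'v set \<Rightarrow> real) \<Rightarrow> real \<Rightarrow> nat \<Rightarrow> real \<Rightarrow> ('v set \<Rightarrow> 'v \<Rightarrow> real)
   \<Rightarrow> ('v set \<Rightarrow> real) \<Rightarrow> bool" where
  "loop_cond E \<Sigma> n p \<Delta> vstar \<psi> \<longleftrightarrow>
     norm1 (\<Union>E) \<psi> < 1 \<and>
     heavy_part E \<Sigma> n p (scale \<Delta> (Vmap (\<Union>E) vstar \<psi>)) \<noteq> \<Union>E"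

text \<open>One iteration of the while loop: L is the set of light vertices, delta the largest
admissible value (the step is only possible if such a largest value exists).\<close>
definition construct_step ::
  "'v set set \<Rightarrow> ('v set \<Rightarrow> 'v set \<Rightarrow> real) \<Rightarrow> real \<Rightarrow> nat \<Rightarrow> real \<Rightarrow> ('v set \<Rightarrow> 'v \<Rightarrow> real)
   \<Rightarrow> ('v set \<Rightarrow> real) \<Rightarrow> ('v set \<Rightarrow> real) \<Rightarrow> bool" where
  "construct_step E \<Sigma> n p \<Delta> vstar \<psi> \<psi>' \<longleftrightarrow>
     loop_cond E \<Sigma> n p \<Delta> vstar \<psi> \<and>
     (let V = \<Union>E;
          L = V - heavy_part E \<Sigma> n p (scale \<Delta> (Vmap V vstar \<psi>))
      in \<exists>\<delta>. is_arg_max id (\<lambda>d. 0 < d \<and> d \<le> 1 - norm1 V \<psi> \<and>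
                 consistent E \<Sigma> n p
                   (scale \<Delta> (\<lambda>x. Vmap V vstar \<psi> x + d * vstar L x))) \<delta>
             \<and> \<psi>' = \<psi>(L := \<delta>))"

definition construct_returns ::
  "'v set set \<Rightarrow> ('v set \<Rightarrow> 'v set \<Rightarrow> real) \<Rightarrow> real \<Rightarrow> nat \<Rightarrow> real \<Rightarrow> ('v set \<Rightarrow> 'v \<Rightarrow> real)
   \<Rightarrow> ('v set \<Rightarrow> real) \<Rightarrow> bool" where
  "construct_returns E \<Sigma> n p \<Delta> vstar \<psi> \<longleftrightarrow>
     (construct_step E \<Sigma> n p \<Delta> vstar)\<^sup>*\<^sup>* (\<lambda>_. 0) \<psi> \<and>
     \<not> loop_cond E \<Sigma> n p \<Delta> vstar \<psi>"

end

theory Submission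
  imports Defs
begin

lemma cons_mono:
  assumes "consistent E \<Sigma> n p v" "\<forall>x\<in>\<Union>E. w x \<le> v x" "n \<ge> 0" "p \<ge> 1"
  shows "consistent E \<Sigma> n p w"
  unfolding consistent_def consistent_set_def
proof (intro ballI allI impI)
  fix e U assume e: "e \<in> E" and U: "U \<subseteq> e"
  have "wsum w U \<le> wsum v U" unfolding wsum_def
    by (rule sum_mono) (use e U assms(2) in blast)
  then have "real p powr wsum w U \<le> real p powr wsum v U"
    by (rule powr_mono) (use assms(4) in simp)
  then have "n / real p powr wsum v U \<le> n / real p powr wsum w U"
    using assms(3,4) by (intro divide_left_mono) auto
  moreover have "\<Sigma> e U \<le> n / real p powr wsum v U"
    using assms(1) e U unfolding consistent_def consistent_set_def by blast
  ultimately show "\<Sigma> e U \<le> n / real p powr wsum w U" by linarith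
qed

lemma upd_eq: "(\<psi>::'a \<Rightarrow> real)(L := d) = (\<lambda>U. \<psi> U + (if U = L then d - \<psi> L else 0))"
  by (rule ext) auto

lemma invariant:
  assumes finV: "finite (\<Union>E)"
    and vnn: "\<forall>U x. U \<subseteq> \<Union>E \<longrightarrow> 0 \<le> vstar U x"
    and n0: "n \<ge> 0" and p1: "p \<ge> 1" and D: "\<Delta> > 0"
    and st: "(construct_step E \<Sigma> n p \<Delta> vstar)\<^sup>*\<^sup>* \<psi>0 \<psi>"
    and I0: "(\<forall>U. 0 \<le> \<psi>0 U) \<and> norm1 (\<Union>E) \<psi>0 \<le> 1 \<and> consistent E \<Sigma> n p (scale \<Delta> (Vmap (\<Union>E) vstar \<psi>0))"
  shows "(\<forall>U. 0 \<le> \<psi> U) \<and> norm1 (\<Union>E) \<psi> \<le> 1 \<and> consistent E \<Sigma> n p (scale \<Delta> (Vmap (\<Union>E) vstar \<psi>))"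
  using st
proof (induction rule: rtranclp_induct)
  case base
  then show ?case using I0 by blast
next
  case (step \<psi> \<psi>')
  define V where "V = \<Union>E"
  define L where "L = V - heavy_part E \<Sigma> n p (scale \<Delta> (Vmap V vstar \<psi>))"
  obtain \<delta> where am: "is_arg_max id (\<lambda>d. 0 < d \<and> d \<le> 1 - norm1 V \<psi> \<and>
                 consistent E \<Sigma> n p
                   (scale \<Delta> (\<lambda>x. Vmap V vstar \<psi> x + d * vstar L x))) \<delta>"
     and ps: "\<psi>' = \<psi>(L := \<delta>)"
    using step(2) unfolding construct_step_def Let_def V_def L_def by blast
  have P: "0 < \<delta>" "\<delta> \<le> 1 - norm1 V \<psi>"
     "consistent E \<Sigma> n p (scale \<Delta> (\<lambda>x. Vmap V vstar \<psi> x + \<delta> * vstar L x))"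
    using am unfolding is_arg_max_def by auto
  have LV: "L \<in> Pow V" unfolding L_def by auto
  have finP: "finite (Pow V)" using finV V_def by simp
  have IH: "\<forall>U. 0 \<le> \<psi> U" "norm1 V \<psi> \<le> 1" "consistent E \<Sigma> n p (scale \<Delta> (Vmap V vstar \<psi>))"
    using step(3) V_def by auto
  have N: "norm1 V \<psi>' = norm1 V \<psi> + (\<delta> - \<psi> L)"
    unfolding ps upd_eq norm1_def using finP LV by (simp add: sum.distrib)
  have VM: "Vmap V vstar \<psi>' x = Vmap V vstar \<psi> x + (\<delta> - \<psi> L) * vstar L x" for x
    unfolding ps upd_eq Vmap_def using finP LV
    by (simp add: sum.distrib distrib_right if_distrib[where f="\<lambda>a. a * vstar _ x"] sum.delta cong: if_cong)
  have "consistent E \<Sigma> n p (scale \<Delta> (Vmap V vstar \<psi>'))"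
  proof (rule cons_mono[OF P(3) _ n0 p1], intro ballI)
    fix x assume "x \<in> \<Union>E"
    have "0 \<le> vstar L x" using vnn LV V_def by auto
    then have "(\<delta> - \<psi> L) * vstar L x \<le> \<delta> * vstar L x"
      using IH(1) by (simp add: mult_right_mono)
    then show "scale \<Delta> (Vmap V vstar \<psi>') x \<le> scale \<Delta> (\<lambda>x. Vmap V vstar \<psi> x + \<delta> * vstar L x) x"
      unfolding scale_def VM using D by (simp add: divide_right_mono)
  qed
  moreover have "\<forall>U. 0 \<le> \<psi>' U" using IH(1) P(1) ps by auto
  moreover have "norm1 V \<psi>' \<le> 1" using N P(2) IH(1) by (smt (verit))
  ultimately show ?case using V_def by auto
qed

theorem lemma4p11:
  fixes E :: "'v set set"
    and R :: "'v set \<Rightarrow> ('v \<Rightarrow> 'd) set"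
    and \<Sigma> :: "'v set \<Rightarrow> 'v set \<Rightarrow> real"
    and n :: real and p :: nat and \<Delta> :: real
    and vstar :: "'v set \<Rightarrow> 'v \<Rightarrow> real"
    and \<psi> :: "'v set \<Rightarrow> real"
  assumes finE: "finite E" and fin_edges: "\<forall>e\<in>E. finite e"
    and finR: "\<forall>e\<in>E. finite (R e)"
    and input_size: "n = (\<Sum>e\<in>E. real (card (R e)))"
    and p_pos: "p \<ge> 1"
    and unif: "uniformized E R \<Sigma>"
    and sigma_le_n: "\<forall>e\<in>E. \<forall>U. U \<subseteq> e \<longrightarrow> \<Sigma> e U \<le> n"
    and Delta_pos: "\<Delta> > 0"
    and vstar_min: "\<forall>U. U \<subseteq> \<Union>E \<longrightarrow> is_min_fvc U (red (induced E U)) (vstar U)"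
    and vstar_zero: "\<forall>U x. x \<notin> U \<longrightarrow> vstar U x = 0"
    and ret: "construct_returns E \<Sigma> n p \<Delta> vstar \<psi>"
  shows "norm1 (\<Union>E) \<psi> \<le> 1
    \<and> consistent E \<Sigma> n p (scale \<Delta> (Vmap (\<Union>E) vstar \<psi>))
    \<and> (\<Sum>x\<in>\<Union>E. \<bar>Vmap (\<Union>E) vstar \<psi> x\<bar>) \<le> kappa E"
proof -
  define V where "V = \<Union>E"
  have finV: "finite V" using finE fin_edges V_def by auto
  have vnn: "\<forall>U x. U \<subseteq> \<Union>E \<longrightarrow> 0 \<le> vstar U x"
  proof (intro allI impI)
    fix U x assume U: "U \<subseteq> \<Union>E"
    show "0 \<le> vstar U x"
    proof (cases "x \<in> U")
      case True then show ?thesis using vstar_min U unfolding is_min_fvc_def is_fvc_def by auto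
    next
      case False then show ?thesis using vstar_zero by auto
    qed
  qed
  have n0: "n \<ge> 0" using input_size by (simp add: sum_nonneg)
  have I0: "(\<forall>U. 0 \<le> (\<lambda>_. 0::real) U) \<and> norm1 (\<Union>E) (\<lambda>_. 0) \<le> 1
      \<and> consistent E \<Sigma> n p (scale \<Delta> (Vmap (\<Union>E) vstar (\<lambda>_. 0)))"
    using sigma_le_n p_pos
    by (simp add: norm1_def consistent_def consistent_set_def scale_def Vmap_def wsum_def)
  have I: "(\<forall>U. 0 \<le> \<psi> U) \<and> norm1 (\<Union>E) \<psi> \<le> 1 \<and> consistent E \<Sigma> n p (scale \<Delta> (Vmap (\<Union>E) vstar \<psi>))"
    by (rule invariant[OF _ vnn n0 p_pos Delta_pos _ I0])
       (use finV V_def ret in \<open>auto simp: construct_returns_def\<close>)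
  define c where "c U = (\<Sum>x\<in>U. vstar U x)" for U
  have cV: "(\<Sum>x\<in>V. vstar U x) = c U" if "U \<in> Pow V" for U
    unfolding c_def using that finV vstar_zero
    by (intro sum.mono_neutral_right) auto
  have c0: "0 \<le> c U" if "U \<in> Pow V" for U
    unfolding c_def using that vnn V_def by (intro sum_nonneg) auto
  have ck: "c U \<le> kappa E" if U: "U \<in> Pow V" for U
  proof -
    have m: "is_min_fvc U (red (induced E U)) (vstar U)" using vstar_min U V_def by auto
    have "tau_star U (red (induced E U)) = c U"
      unfolding tau_star_def c_def
      by (rule cInf_eq_minimum) (use m in \<open>auto simp: is_min_fvc_def\<close>)
    moreover have "finite {tau_star S (red (induced E S)) | S. S \<subseteq> \<Union>E}"
    proof -
      have "{tau_star S (red (induced E S)) | S. S \<subseteq> \<Union>E} = (\<lambda>S. tau_star S (red (induced E S))) ` Pow V"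
        using V_def by auto
      then show ?thesis using finV by simp
    qed
    ultimately show ?thesis unfolding kappa_def using U V_def
      by (metis (mono_tags, lifting) Max_ge PowD mem_Collect_eq)
  qed
  have k0: "0 \<le> kappa E" using ck[of "{}"] c0[of "{}"] by auto
  have "(\<Sum>x\<in>V. \<bar>Vmap V vstar \<psi> x\<bar>) = (\<Sum>x\<in>V. \<Sum>U\<in>Pow V. \<psi> U * vstar U x)"
    unfolding Vmap_def using I vnn V_def
    by (intro sum.cong refl abs_of_nonneg sum_nonneg) auto
  also have "\<dots> = (\<Sum>U\<in>Pow V. \<psi> U * (\<Sum>x\<in>V. vstar U x))"
    by (subst sum.swap) (simp add: sum_distrib_left)
  also have "\<dots> = (\<Sum>U\<in>Pow V. \<psi> U * c U)"
    using cV by (intro sum.cong) auto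
  also have "\<dots> \<le> (\<Sum>U\<in>Pow V. \<psi> U * kappa E)"
    using ck I by (intro sum_mono mult_left_mono) auto
  also have "\<dots> = kappa E * norm1 V \<psi>"
    unfolding norm1_def by (simp add: sum_distrib_left mult.commute)
  also have "\<dots> \<le> kappa E * 1"
    using I k0 V_def by (intro mult_left_mono) auto
  finally show ?thesis using I V_def by simp
qed

end
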